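(* Let $r\ge4$ and $n\ge1$. Define $d=b_r$ if $r\le (1+2^n)^2/2^n$, and $d=1+2^n$ otherwise. For $i\in\{0,1,\dots,2^n-1\}$ let $X_i=(x_{j,i})_{j\ge1}$ with $x_{j,i}=d^{\,j+i/2^n}$. Then each $X_i$ has robustness at most $r$, and for every $T\ge d$, $$\frac{T}{\max_{0\le i\le 2^n-1}\ell(X_i,T)}\ \le\ \frac{d^{1+\frac{1}{2^n}}}{d-1}.$$ (That is, the scheme that uses an error-free $n$-bit prediction to select the best schedule among $X_0,\dots,X_{2^n-1}$ has robustness at most $r$ and consistency at most $d^{1+1/2^n}/(d-1)$.)
   Context: A schedule is an increasing sequence $X=(x_j)_{j\ge1}$ of positive reals (contract lengths), with completion times $S_j=\sum_{k=1}^j x_k$. For $T>0$, $\ell(X,T)=\max\{x_j: S_j\le T\}$ ($0$ if none). The robustness of $X$ is $\sup_{j\ge2}S_j/x_{j-1}$. For $r\ge4$, $b_r=\frac{r+\sqrt{r^2-4r}}{2}$. *)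

theory Defs
  imports "HOL-Analysis.Analysis"
begin

(* A schedule is a sequence x :: nat => real, used at indices j >= 1 (x 0 is ignored). *)

definition compl_time :: "(nat \<Rightarrow> real) \<Rightarrow> nat \<Rightarrow> real" where
  "compl_time x j = (\<Sum>k=1..j. x k)"

definition ell :: "(nat \<Rightarrow> real) \<Rightarrow> real \<Rightarrow> real" where
  "ell x T = (if \<exists>j\<ge>1. compl_time x j \<le> T
              then Max {x j | j. j \<ge> 1 \<and> compl_time x j \<le> T} else 0)"

definition robustness :: "(nat \<Rightarrow> real) \<Rightarrow> ereal" where
  "robustness x = (SUP j\<in>{2..}. ereal (compl_time x j / x (j - 1)))"

definition b_r :: "real \<Rightarrow> real" where
  "b_r r = (r + sqrt (r^2 - 4 * r)) / 2"

end

theory Submission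
  imports Defs
begin

lemma geo_le: "(d::real) > 1 \<Longrightarrow> (\<Sum>k=1..j. d^k) \<le> d^(j+1)/(d-1)"
proof (induction j)
  case 0 then show ?case by simp
next
  case (Suc j)
  have "(\<Sum>k=1..Suc j. d^k) = (\<Sum>k=1..j. d^k) + d^(j+1)" by simp
  also have "\<dots> \<le> d^(j+1)/(d-1) + d^(j+1)" using Suc by simp
  also have "\<dots> = d^(Suc j+1)/(d-1)" using Suc.prems by (simp add: field_simps)
  finally show ?case .
qed

lemma geo_ge: "(d::real) \<ge> 1 \<Longrightarrow> real j \<le> (\<Sum>k=1..j. d^k)"
proof -
  assume "d \<ge> 1"
  then have "(\<Sum>k=1..j. (1::real)) \<le> (\<Sum>k=1..j. d^k)"
    by (intro sum_mono) simp
  then show ?thesis by simp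
qed

lemma ct_eq: "(d::real) > 0 \<Longrightarrow>
   compl_time (\<lambda>j. d powr (real j + a)) j = d powr a * (\<Sum>k=1..j. d^k)"
  unfolding compl_time_def by (simp add: powr_add powr_realpow sum_distrib_left mult.commute)

lemma ell_ge:
  assumes "j \<ge> 1" "compl_time x j \<le> T" "\<And>j. j \<ge> 1 \<Longrightarrow> real j \<le> compl_time x j"
  shows "x j \<le> ell x T"
proof -
  have sub: "{x j | j. j \<ge> 1 \<and> compl_time x j \<le> T} \<subseteq> x ` {..nat \<lceil>T\<rceil>}"
  proof
    fix y assume "y \<in> {x j | j. j \<ge> 1 \<and> compl_time x j \<le> T}"
    then obtain k where k: "y = x k" "k \<ge> 1" "compl_time x k \<le> T" by blast
    then have "real k \<le> T" using assms(3)[of k] by linarith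
    then have "k \<le> nat \<lceil>T\<rceil>" by linarith
    then show "y \<in> x ` {..nat \<lceil>T\<rceil>}" using k by auto
  qed
  have fin: "finite {x j | j. j \<ge> 1 \<and> compl_time x j \<le> T}"
    by (rule finite_subset[OF sub]) simp
  have ex: "\<exists>j\<ge>1. compl_time x j \<le> T" using assms by blast
  have "x j \<in> {x j | j. j \<ge> 1 \<and> compl_time x j \<le> T}" using assms by blast
  then show ?thesis unfolding ell_def using ex fin by (simp add: Max_ge)
qed

theorem theorem3:
  fixes r :: real and n :: nat and d :: real and X :: "nat \<Rightarrow> nat \<Rightarrow> real"
  assumes "r \<ge> 4" and "n \<ge> 1"
    and "d = (if r \<le> (1 + 2^n)^2 / 2^n then b_r r else 1 + 2^n)"
    and "\<And>i j. X i j = d powr (real j + real i / 2^n)"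
  shows "(\<forall>i < 2^n. robustness (X i) \<le> ereal r) \<and>
         (\<forall>T \<ge> d. T / Max {ell (X i) T | i. i < 2^n} \<le> d powr (1 + 1 / 2^n) / (d - 1))"
proof -
  define N :: real where "N = 2^n"
  have Npos: "N \<ge> 1" unfolding N_def by simp
  have Xe: "X i = (\<lambda>j. d powr (real j + real i / N))" for i
    using assms(4) unfolding N_def by auto
  have dprop: "d \<ge> 2 \<and> d^2/(d-1) \<le> r"
  proof (cases "r \<le> (1 + 2^n)^2 / 2^n")
    case True
    define s where "s = sqrt (r^2 - 4*r)"
    have "0 \<le> r*(r-4)" using assms(1) by simp
    then have r4: "4*r \<le> r^2" by (simp add: power2_eq_square algebra_simps)
    then have s2: "s^2 = r^2 - 4*r" unfolding s_def by simp
    have s0: "s \<ge> 0" unfolding s_def using r4 by simp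
    have dd: "d = (r + s)/2" using True assms(3) unfolding b_r_def s_def by simp
    have "d \<ge> 2" using dd s0 assms(1) by simp
    moreover have "d^2 = r*(d-1)" unfolding dd using s2
      by (simp add: power2_eq_square field_simps)
    ultimately show ?thesis by simp
  next
    case False
    have dd: "d = 1 + N" using False assms(3) unfolding N_def by simp
    have "d^2/(d-1) = (1+N)^2/N" unfolding dd by simp
    also have "\<dots> \<le> r" using False unfolding N_def by simp
    finally show ?thesis using dd Npos by simp
  qed
  have d1: "d > 1" and d0: "d > 0" using dprop by auto
  have ct: "compl_time (X i) j = d powr (real i / N) * (\<Sum>k=1..j. d^k)" for i j
    unfolding Xe using ct_eq[OF d0] by simp
  have ctle: "compl_time (X i) j \<le> X i j * d / (d-1)" for i j
  proof -
    have "compl_time (X i) j \<le> d powr (real i / N) * (d^(j+1)/(d-1))"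
      unfolding ct by (intro mult_left_mono geo_le d1) simp
    also have "\<dots> = X i j * d / (d-1)"
      unfolding Xe using d0 by (simp add: powr_add powr_realpow field_simps)
    finally show ?thesis .
  qed
  have ctge: "real j \<le> compl_time (X i) j" for i j
  proof -
    have "real j \<le> (\<Sum>k=1..j. d^k)" using geo_ge d1 by simp
    also have "\<dots> \<le> d powr (real i / N) * (\<Sum>k=1..j. d^k)"
    proof -
      have "1 \<le> d powr (real i / N)" using d1 Npos by (intro ge_one_powr_ge_zero) auto
      moreover have "0 \<le> (\<Sum>k=1..j. d^k)" using d0 by (intro sum_nonneg) simp
      ultimately show ?thesis using mult_right_mono by fastforce
    qed
    finally show ?thesis unfolding ct .
  qed
  have rob: "robustness (X i) \<le> ereal r" for i
    unfolding robustness_def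
  proof (rule SUP_least)
    fix j :: nat assume "j \<in> {2..}"
    then have j: "j \<ge> 2" by simp
    have xpos: "X i (j-1) > 0" unfolding Xe using d0 by simp
    have "X i j = X i (j-1) * d"
    proof -
      have e: "real j + real i / N = (real (j-1) + real i / N) + 1" using j by (simp add: of_nat_diff)
      have "X i j = d powr ((real (j-1) + real i / N) + 1)" unfolding Xe e ..
      also have "\<dots> = d powr (real (j-1) + real i / N) * d powr 1" by (rule powr_add)
      also have "\<dots> = X i (j-1) * d" unfolding Xe using d0 by simp
      finally show ?thesis .
    qed
    then have "compl_time (X i) j \<le> X i (j-1) * (d^2/(d-1))"
      using ctle[of i j] by (simp add: power2_eq_square field_simps)
    also have "\<dots> \<le> X i (j-1) * r" using dprop xpos by (intro mult_left_mono) auto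
    finally have "compl_time (X i) j / X i (j-1) \<le> r" using xpos by (simp add: field_simps)
    then show "ereal (compl_time (X i) j / X i (j - 1)) \<le> ereal r" by simp
  qed
  have cons: "T / Max {ell (X i) T | i. i < 2^n} \<le> d powr (1 + 1 / 2^n) / (d - 1)"
    if T: "T \<ge> d" for T
  proof -
    have key: "\<exists>i<2^n. \<exists>v>0. v \<le> ell (X i) T \<and> T / v \<le> d powr (1 + 1 / N) / (d - 1)"
    proof -
      define c where "c = T*(d-1)/d"
      have c0: "c > 0" unfolding c_def using T d1 by simp
      have Tc: "T = c * d / (d-1)" unfolding c_def using d1 by simp
      define t where "t = log d c * N"
      have dct: "d powr (t / N) = c" unfolding t_def using Npos d1 c0 by simp
      have bnd1: "d \<le> d powr (1 + 1/N)"
      proof -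
        have "d powr (1 + 1/N) = d * d powr (1/N)" using d0 by (simp add: powr_add)
        moreover have "1 \<le> d powr (1/N)" using d1 Npos by (intro ge_one_powr_ge_zero) auto
        ultimately show ?thesis using d0 by simp
      qed
      show ?thesis
      proof (cases "\<lfloor>t\<rfloor> \<ge> int (2^n)")
        case True
        define mm where "mm = nat \<lfloor>t\<rfloor>"
        have m0: "0 \<le> \<lfloor>t\<rfloor>" using True of_nat_0_le_iff[of "2^n"] by linarith
        then have rm: "real mm = real_of_int \<lfloor>t\<rfloor>" unfolding mm_def by simp
        have mmt: "real mm \<le> t" "t < real mm + 1" unfolding rm by linarith+
        have mmge: "mm \<ge> 2^n" unfolding mm_def using True by linarith
        define j where "j = mm div 2^n"
        define i where "i = mm mod 2^n"
        have i: "i < 2^n" unfolding i_def by simp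
        have j1: "j \<ge> 1" unfolding j_def using mmge by (simp add: Suc_le_eq div_greater_zero_iff)
        have e0: "mm = j * 2^n + i" unfolding j_def i_def by (rule div_mult_mod_eq[symmetric])
        have "real mm = real j * N + real i" unfolding N_def by (subst e0) simp
        then have ex: "real j + real i / N = real mm / N" using Npos by (simp add: field_simps)
        define v where "v = X i j"
        have vdef: "v = d powr (real mm / N)" unfolding v_def Xe ex ..
        have v0: "v > 0" unfolding vdef using d0 by simp
        have vc: "v \<le> c" unfolding vdef dct[symmetric] using mmt Npos d1
          by (intro powr_mono) (auto simp: divide_right_mono)
        have "c < d powr ((real mm + 1) / N)" unfolding dct[symmetric] using mmt Npos d1
          by (intro powr_less_mono) (auto simp: divide_strict_right_mono)
        also have "\<dots> = v * d powr (1/N)" unfolding vdef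
          by (simp add: add_divide_distrib powr_add)
        finally have cv: "c < v * d powr (1/N)" .
        have "compl_time (X i) j \<le> v * d / (d-1)" using ctle[of i j] unfolding v_def .
        also have "\<dots> \<le> T" unfolding Tc using vc d1 by (simp add: divide_right_mono)
        finally have "v \<le> ell (X i) T" unfolding v_def using j1 ctge by (intro ell_ge) auto
        moreover have "T / v \<le> d powr (1 + 1 / N) / (d - 1)"
        proof -
          have "T < v * d powr (1/N) * d / (d-1)" unfolding Tc using cv d1
            by (simp add: divide_strict_right_mono)
          then have "T / v < d powr (1/N) * d / (d-1)" using v0 by (simp add: field_simps)
          also have "\<dots> = d powr (1 + 1 / N) / (d - 1)" using d0 by (simp add: powr_add)
          finally show ?thesis by simp
        qed
        ultimately show ?thesis using i v0 by blast
      next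
        case False
        then have "\<lfloor>t\<rfloor> < 2^n" by simp
        then have "t < real_of_int (2^n)" by (simp only: floor_less_iff)
        then have "t < N" unfolding N_def by simp
        then have "t / N < 1" using Npos by simp
        then have "c < d" using dct d1 powr_less_mono[of "t/N" 1 d] by simp
        then have Tlt: "T < d * d / (d-1)" unfolding Tc using d1 by (simp add: divide_strict_right_mono)
        have X01: "X 0 1 = d" unfolding Xe using d0 by simp
        have "compl_time (X 0) 1 = d" unfolding compl_time_def using X01 by simp
        then have "d \<le> ell (X 0) T" using X01 T ctge ell_ge[of 1 "X 0" T] by auto
        moreover have "T / d \<le> d powr (1 + 1 / N) / (d - 1)"
        proof -
          have "T / d < d / (d-1)" using Tlt d1 by (simp add: field_simps)
          also have "\<dots> \<le> d powr (1 + 1 / N) / (d - 1)" using bnd1 d1 by (simp add: divide_right_mono)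
          finally show ?thesis by simp
        qed
        ultimately show ?thesis using d0 by force
      qed
    qed
    then obtain i v where i: "i < 2^n" and v: "v > 0" "v \<le> ell (X i) T"
      "T / v \<le> d powr (1 + 1 / N) / (d - 1)" by blast
    have fin: "finite {ell (X i) T | i. i < (2::nat)^n}" by simp
    have "ell (X i) T \<le> Max {ell (X i) T | i. i < 2^n}"
      using i by (intro Max_ge fin) blast
    then have "v \<le> Max {ell (X i) T | i. i < 2^n}" using v by linarith
    then have "T / Max {ell (X i) T | i. i < 2^n} \<le> T / v"
      using v T d0 by (intro divide_left_mono) auto
    then show ?thesis using v unfolding N_def by linarith
  qed
  show ?thesis using rob cons by blast
qed

end
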